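(* Fix $N\ge1$. Partition the days $\{0,1,\dots,N-1\}$ into break days (on which the dose is forced to be $0$), fixed days (on which the dose is forced to equal a prescribed value $\bar d_k\ge0$), and free days, with at least one free day, and with the prescribed fixed doses satisfying $\sum_{k\text{ fixed}}\mathrm{BED}_O(\bar d_k)\le c$. Consider minimizing $Y_{N-1}^+$ over the free doses $d_k\ge0$ subject to $\sum_{k=0}^{N-1}\mathrm{BED}_O(d_k)\le c$ (with the forced values on break and fixed days). Assume $\phi(x)>0$ for all $x>0$ and $\phi$ is non-increasing in $x$. If $[\alpha/\beta]_O\ge\gamma[\alpha/\beta]_T$, then an optimal solution is to deliver a single nonzero dose on the last free day (all other free days receiving dose $0$). If $[\alpha/\beta]_O<\gamma[\alpha/\beta]_T$, then an optimal sequence of doses, restricted to the free days, is non-decreasing over the course of treatment.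
   Context: Model: Tumor parameters $\alpha_T>0$, $\beta_T>0$, $[\alpha/\beta]_T=\alpha_T/\beta_T$; organ-at-risk (OAR) parameter $[\alpha/\beta]_O>0$; sparing factor $0<\gamma<1$; OAR limit $c>0$. Define $\mathrm{BED}_T(d)=d\left(1+\frac{d}{[\alpha/\beta]_T}\right)$ and $\mathrm{BED}_O(d)=\gamma d\left(1+\frac{\gamma d}{[\alpha/\beta]_O}\right)$. Tumor growth between doses follows $\frac{1}{x}\frac{dx}{dt}=\phi(x)$, with $\phi:(0,\infty)\to\mathbb{R}$ continuous and non-increasing. Doses $d_0,\dots,d_{N-1}$ are delivered at times $0,1,\dots,N-1$. With $Y=\ln(\text{number of tumor cells})/\alpha_T$, let $F$ be the one-day growth map for $Y$ under the ODE. With initial cell number $X_0>0$ and $Y_0^-=\ln(X_0)/\alpha_T$: $Y_0^+=Y_0^--\mathrm{BED}_T(d_0)$, $Y_{i+1}^+=F(Y_i^+)-\mathrm{BED}_T(d_{i+1})$ for $i=0,\dots,N-2$. *)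

theory Defs
  imports "HOL-Analysis.Analysis"
begin

text \<open>Biologically effective doses. abT = [alpha/beta]_T, abO = [alpha/beta]_O, g = sparing factor.\<close>
definition BED_T :: "real \<Rightarrow> real \<Rightarrow> real" where
  "BED_T abT d = d * (1 + d / abT)"

definition BED_O :: "real \<Rightarrow> real \<Rightarrow> real \<Rightarrow> real" where
  "BED_O g abO d = g * d * (1 + g * d / abO)"

definition growth_sol :: "(real \<Rightarrow> real) \<Rightarrow> (real \<Rightarrow> real) \<Rightarrow> bool" where
  "growth_sol phi x \<longleftrightarrow>
     (\<forall>t\<in>{0..1}. x t > 0 \<and> (x has_real_derivative (x t * phi (x t))) (at t within {0..1}))"

text \<open>One-day growth map for Y = ln(cell number)/alphaT.\<close>
definition growth_map :: "real \<Rightarrow> (real \<Rightarrow> real) \<Rightarrow> real \<Rightarrow> real" where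
  "growth_map aT phi y =
     (THE z. \<exists>x. growth_sol phi x \<and> x 0 = exp (aT * y) \<and> z = ln (x 1) / aT)"

primrec Yplus :: "real \<Rightarrow> real \<Rightarrow> (real \<Rightarrow> real) \<Rightarrow> real \<Rightarrow> (nat \<Rightarrow> real) \<Rightarrow> nat \<Rightarrow> real" where
  "Yplus aT abT phi X0 d 0 = ln X0 / aT - BED_T abT (d 0)"
| "Yplus aT abT phi X0 d (Suc i) =
     growth_map aT phi (Yplus aT abT phi X0 d i) - BED_T abT (d (Suc i))"

definition feasible ::
  "nat \<Rightarrow> nat set \<Rightarrow> nat set \<Rightarrow> (nat \<Rightarrow> real) \<Rightarrow> real \<Rightarrow> real \<Rightarrow> real \<Rightarrow> (nat \<Rightarrow> real) \<Rightarrow> bool" where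
  "feasible N Brk Fix dbar g abO c d \<longleftrightarrow>
     (\<forall>k<N. d k \<ge> 0) \<and> (\<forall>k\<in>Brk. d k = 0) \<and> (\<forall>k\<in>Fix. d k = dbar k) \<and>
     (\<Sum>k<N. BED_O g abO (d k)) \<le> c"

definition optimal ::
  "real \<Rightarrow> real \<Rightarrow> (real \<Rightarrow> real) \<Rightarrow> real \<Rightarrow>
   nat \<Rightarrow> nat set \<Rightarrow> nat set \<Rightarrow> (nat \<Rightarrow> real) \<Rightarrow> real \<Rightarrow> real \<Rightarrow> real \<Rightarrow> (nat \<Rightarrow> real) \<Rightarrow> bool" where
  "optimal aT abT phi X0 N Brk Fix dbar g abO c d \<longleftrightarrow>
     feasible N Brk Fix dbar g abO c d \<and>
     (\<forall>d'. feasible N Brk Fix dbar g abO c d' \<longrightarrow>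
        Yplus aT abT phi X0 d (N - 1) \<le> Yplus aT abT phi X0 d' (N - 1))"

end

theory Submission
  imports Defs
begin



lemma barrier:
  fixes f f' :: "real \<Rightarrow> real"
  assumes der: "\<And>t. t \<in> {0..1} \<Longrightarrow> (f has_real_derivative f' t) (at t within {0..1})"
    and f0: "f 0 \<le> 0"
    and neg: "\<And>t. t \<in> {0..1} \<Longrightarrow> f t > 0 \<Longrightarrow> f' t \<le> 0"
    and t: "t \<in> {0..1}"
  shows "f t \<le> 0"
proof -
  define m where "m = (\<lambda>x::real. (max x 0)^2)"
  have dm: "(m has_real_derivative 2 * max x 0) (at x)" for x
  proof (cases "x = 0")
    case True
    have "((\<lambda>h. (m h - m 0) / h) \<longlongrightarrow> 0) (at 0)"
    proof (rule tendsto_sandwich[where f="\<lambda>h. - \<bar>h\<bar>" and h="\<lambda>h. \<bar>h\<bar>"])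
      show "\<forall>\<^sub>F h in at 0. - \<bar>h\<bar> \<le> (m h - m 0) / h"
        by (auto simp: m_def power2_eq_square max_def divide_simps intro!: always_eventually)
      show "\<forall>\<^sub>F h in at 0. (m h - m 0) / h \<le> \<bar>h\<bar>"
        by (auto simp: m_def power2_eq_square max_def divide_simps intro!: always_eventually)
      show "((\<lambda>h. - \<bar>h\<bar>) \<longlongrightarrow> 0) (at (0::real))"
        using tendsto_minus[OF tendsto_rabs[OF tendsto_ident_at[of "0::real" UNIV]]] by simp
      show "((\<lambda>h::real. \<bar>h\<bar>) \<longlongrightarrow> 0) (at 0)"
        using tendsto_rabs[OF tendsto_ident_at[of "0::real" UNIV]] by simp
    qed
    then show ?thesis using True by (simp add: DERIV_def)
  next
    case False
    show ?thesis
    proof (cases "x > 0")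
      case True
      have "((\<lambda>y. y^2) has_real_derivative 2 * max x 0) (at x)"
        using True by (auto intro!: derivative_eq_intros)
      then show ?thesis
        by (rule has_field_derivative_transform_within_open[where S="{0<..}"]) (use True in \<open>auto simp: m_def\<close>)
    next
      case False2: False
      have neg: "x < 0" using False False2 by auto
      have "((\<lambda>y. 0) has_real_derivative 2 * max x 0) (at x)"
        using neg by (auto intro!: derivative_eq_intros)
      then show ?thesis
        by (rule has_field_derivative_transform_within_open[where S="{..<0}"]) (use neg in \<open>auto simp: m_def\<close>)
    qed
  qed
  define q where "q = (\<lambda>t. m (f t))"
  have dq: "(q has_real_derivative 2 * max (f s) 0 * f' s) (at s within {0..1})" if "s \<in> {0..1}" for s
    unfolding q_def using DERIV_chain2[OF dm der[OF that]] by simp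
  have dq_nonpos: "2 * max (f s) 0 * f' s \<le> 0" if "s \<in> {0..1}" for s
    using neg[OF that] by (cases "f s > 0") (auto simp: mult_nonneg_nonpos max_def)
  have "\<exists>z\<in>{0..t}. q t - q 0 = (\<lambda>h. (2 * max (f z) 0 * f' z) * h) (t - 0)"
  proof (rule mvt_very_simple)
    show "0 \<le> t" using t by auto
    fix x assume x: "0 \<le> x" "x \<le> t"
    have "(q has_real_derivative 2 * max (f x) 0 * f' x) (at x within {0..t})"
      using dq[of x] x t by (auto intro: DERIV_subset)
    then show "(q has_derivative (\<lambda>h. (2 * max (f x) 0 * f' x) * h)) (at x within {0..t})"
      by (simp add: has_field_derivative_def)
  qed
  then obtain z where z: "z \<in> {0..t}" "q t - q 0 = (2 * max (f z) 0 * f' z) * t" by auto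
  have "q 0 = 0" using f0 by (simp add: q_def m_def)
  moreover have "(2 * max (f z) 0 * f' z) * t \<le> 0"
  proof -
    have "2 * max (f z) 0 * f' z \<le> 0" using dq_nonpos[of z] z t by auto
    moreover have "0 \<le> t" using z by auto
    ultimately show ?thesis by (rule mult_nonpos_nonneg)
  qed
  ultimately have "q t \<le> 0" using z by simp
  then show ?thesis by (simp add: q_def m_def max_def split: if_splits)
qed

lemma exists_sol:
  fixes phi :: "real \<Rightarrow> real"
  assumes phi_cont: "continuous_on {0<..} phi"
    and phi_mono: "\<And>x y. 0 < x \<Longrightarrow> x \<le> y \<Longrightarrow> phi y \<le> phi x"
    and phi_pos: "\<And>x. x > 0 \<Longrightarrow> phi x > 0"
  shows "\<exists>x. growth_sol phi x \<and> x 0 = exp u0"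
proof -
  define \<rho> where "\<rho> = (\<lambda>u. 1 / phi (exp u))"
  have pne: "phi (exp u) \<noteq> 0" for u using phi_pos[of "exp u"] by simp
  have rho_cont: "continuous_on UNIV \<rho>"
    unfolding \<rho>_def
    by (intro continuous_on_divide continuous_on_const continuous_on_compose2[OF phi_cont] continuous_intros)
       (auto simp: pne)
  have rho_pos: "\<rho> u > 0" for u using phi_pos[of "exp u"] by (simp add: \<rho>_def)
  have rho_mono: "\<rho> u \<le> \<rho> v" if "u \<le> v" for u v
    using phi_mono[of "exp u" "exp v"] that phi_pos[of "exp u"] phi_pos[of "exp v"]
    by (simp add: \<rho>_def frac_le)
  define a where "a = u0 - 1"
  define G where "G = (\<lambda>u. integral {a..u} \<rho> - integral {a..u0} \<rho>)"
  have dG: "(G has_real_derivative \<rho> u) (at u)" if "a < u" for u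
  proof -
    have "((\<lambda>x. integral {a..x} \<rho>) has_real_derivative \<rho> u) (at u within {a..u+1})"
      by (rule integral_has_real_derivative) (use that in \<open>auto intro: continuous_on_subset[OF rho_cont]\<close>)
    then have "((\<lambda>x. integral {a..x} \<rho>) has_real_derivative \<rho> u) (at u)"
      using at_within_Icc_at[of a u "u+1"] that by simp
    then show ?thesis unfolding G_def by (auto intro!: derivative_eq_intros)
  qed
  have G0: "G u0 = 0" by (simp add: G_def)
  have Gmono: "G u < G v" if "a < u" "u < v" for u v
  proof (rule DERIV_pos_imp_increasing[OF that(2)])
    fix x assume "u \<le> x" "x \<le> v"
    then have "a < x" using that(1) by linarith
    then show "\<exists>y. DERIV G x :> y \<and> y > 0" using dG rho_pos by blast
  qed
  have Gcont: "isCont G u" if "a < u" for u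
    using dG[OF that] by (rule DERIV_isCont)
  define U where "U = u0 + 1 / \<rho> u0"
  have "u0 < U" using rho_pos[of u0] by (simp add: U_def)
  have GU: "G U \<ge> 1"
  proof -
    obtain z where z: "u0 < z" "z < U" "G U - G u0 = (U - u0) * \<rho> z"
      using MVT2[OF \<open>u0 < U\<close>, of G \<rho>] dG a_def by force
    have "(U - u0) * \<rho> z \<ge> (U - u0) * \<rho> u0"
      using rho_mono[of u0 z] z \<open>u0 < U\<close> by (intro mult_left_mono) auto
    moreover have "(U - u0) * \<rho> u0 = 1" using rho_pos[of u0] by (simp add: U_def)
    ultimately show ?thesis using z G0 by simp
  qed
  define lo where "lo = G (a + 1/2)"
  define hi where "hi = G (U + 1)"
  have lo: "lo < 0" unfolding lo_def using Gmono[of "a+1/2" u0] G0 by (simp add: a_def)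
  have hi: "hi > 1" unfolding hi_def using Gmono[of U "U+1"] GU \<open>u0 < U\<close> by (simp add: a_def)
  define ginv where "ginv = (\<lambda>t. THE u. a < u \<and> G u = t)"
  have ginv_G: "ginv (G u) = u" if "a < u" for u
    unfolding ginv_def
  proof (rule the_equality)
    show "a < u \<and> G u = G u" using that by simp
    fix v assume "a < v \<and> G v = G u"
    then show "v = u" using Gmono[of u v] Gmono[of v u] that by (cases u v rule: linorder_cases) auto
  qed
  have G_ginv: "G (ginv t) = t \<and> a < ginv t" if tt: "lo < t" "t < hi" for t
  proof -
    have "continuous_on {a+1/2..U+1} G"
      using Gcont by (intro continuous_at_imp_continuous_on) (auto simp: a_def)
    then obtain u where u: "a + 1/2 \<le> u" "u \<le> U + 1" "G u = t"
      using IVT'[of G "a+1/2" t "U+1"] tt \<open>u0 < U\<close> \<open>continuous_on {a+1/2..U+1} G\<close>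
      unfolding lo_def hi_def a_def by auto
    then show ?thesis using ginv_G[of u] by auto
  qed
  have dginv: "(ginv has_real_derivative inverse (\<rho> (ginv t))) (at t)" if "lo < t" "t < hi" for t
  proof (rule DERIV_inverse_function[where f=G and a=lo and b=hi])
    show "(G has_real_derivative \<rho> (ginv t)) (at (ginv t))" using G_ginv[OF that] dG by auto
    show "\<rho> (ginv t) \<noteq> 0" using rho_pos[of "ginv t"] by simp
    show "lo < t" "t < hi" by fact+
    show "\<And>y. lo < y \<Longrightarrow> y < hi \<Longrightarrow> G (ginv y) = y" using G_ginv by auto
    define x where "x = ginv t"
    have ax: "a < x" using G_ginv[OF that] by (simp add: x_def)
    have "isCont ginv (G x)"
      apply (rule isCont_inverse_function[where d="(x - a)/2" and f=G and g=ginv and x=x])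
      using ax ginv_G Gcont by (auto simp: abs_if split: if_splits)
    then show "isCont ginv t" using G_ginv[OF that] by (simp add: x_def)
  qed
  define x where "x = (\<lambda>t. exp (ginv t))"
  have "growth_sol phi x"
    unfolding growth_sol_def
  proof
    fix t :: real assume t: "t \<in> {0..1}"
    then have "lo < t" "t < hi" using lo hi by auto
    have "(x has_real_derivative exp (ginv t) * inverse (\<rho> (ginv t))) (at t)"
      unfolding x_def by (rule DERIV_chain2[OF DERIV_exp dginv[OF \<open>lo < t\<close> \<open>t < hi\<close>]])
    moreover have "exp (ginv t) * inverse (\<rho> (ginv t)) = x t * phi (x t)"
      by (simp add: x_def \<rho>_def)
    ultimately show "x t > 0 \<and> (x has_real_derivative (x t * phi (x t))) (at t within {0..1})"
      by (auto simp: x_def intro: has_field_derivative_at_within)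
  qed
  moreover have "x 0 = exp u0" using ginv_G[of u0] G0 by (simp add: x_def a_def)
  ultimately show ?thesis by blast
qed

lemma sol_log_deriv:
  assumes "growth_sol phi x" "t \<in> {0..1}"
  shows "((\<lambda>t. ln (x t)) has_real_derivative phi (x t)) (at t within {0..1})"
proof -
  have xt: "x t > 0" and d: "(x has_real_derivative (x t * phi (x t))) (at t within {0..1})"
    using assms unfolding growth_sol_def by auto
  have "((\<lambda>t. ln (x t)) has_real_derivative inverse (x t) * (x t * phi (x t))) (at t within {0..1})"
    by (rule DERIV_chain2[OF DERIV_ln[OF xt] d])
  moreover have "inverse (x t) * (x t * phi (x t)) = phi (x t)" using xt by (simp add: field_simps)
  ultimately show ?thesis by (simp only:)
qed

lemma sol_compare:
  fixes phi :: "real \<Rightarrow> real"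
  assumes phi_mono: "\<And>x y. 0 < x \<Longrightarrow> x \<le> y \<Longrightarrow> phi y \<le> phi x"
    and s1: "growth_sol phi x1" and s2: "growth_sol phi x2"
    and le: "ln (x1 0) \<le> ln (x2 0)"
  shows "ln (x1 1) \<le> ln (x2 1) \<and> ln (x2 1) - ln (x1 1) \<le> ln (x2 0) - ln (x1 0)"
proof -
  have pos1: "x1 t > 0" and pos2: "x2 t > 0" if "t \<in> {0..1}" for t
    using s1 s2 that unfolding growth_sol_def by auto
  have A: "ln (x1 1) - ln (x2 1) \<le> 0"
  proof (rule barrier[where f="\<lambda>t. ln (x1 t) - ln (x2 t)" and f'="\<lambda>t. phi (x1 t) - phi (x2 t)"])
    show "((\<lambda>t. ln (x1 t) - ln (x2 t)) has_real_derivative phi (x1 t) - phi (x2 t)) (at t within {0..1})"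
      if "t \<in> {0..1}" for t
      using sol_log_deriv[OF s1 that] sol_log_deriv[OF s2 that] by (rule DERIV_diff)
    show "ln (x1 0) - ln (x2 0) \<le> 0" using le by simp
    show "phi (x1 t) - phi (x2 t) \<le> 0" if "t \<in> {0..1}" "0 < ln (x1 t) - ln (x2 t)" for t
    proof -
      have "x2 t < x1 t" using that pos1[of t] pos2[of t] by simp
      then show ?thesis using phi_mono[of "x2 t" "x1 t"] pos2[OF that(1)] by simp
    qed
  qed auto
  have B: "(ln (x2 1) - ln (x1 1)) - (ln (x2 0) - ln (x1 0)) \<le> 0"
  proof (rule barrier[where f="\<lambda>t. (ln (x2 t) - ln (x1 t)) - (ln (x2 0) - ln (x1 0))"
        and f'="\<lambda>t. phi (x2 t) - phi (x1 t)"])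
    show "((\<lambda>t. (ln (x2 t) - ln (x1 t)) - (ln (x2 0) - ln (x1 0))) has_real_derivative phi (x2 t) - phi (x1 t)) (at t within {0..1})"
      if "t \<in> {0..1}" for t
      using DERIV_diff[OF DERIV_diff[OF sol_log_deriv[OF s2 that] sol_log_deriv[OF s1 that]] DERIV_const]
      by simp
    show "phi (x2 t) - phi (x1 t) \<le> 0" if "t \<in> {0..1}" "0 < (ln (x2 t) - ln (x1 t)) - (ln (x2 0) - ln (x1 0))" for t
    proof -
      have "ln (x1 t) < ln (x2 t)" using that le by linarith
      then have "x1 t < x2 t" using that pos1[of t] pos2[of t] by simp
      then show ?thesis using phi_mono[of "x1 t" "x2 t"] pos1[OF that(1)] by simp
    qed
  qed auto
  show ?thesis using A B by simp
qed

lemma growth_map_eq: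
  fixes phi :: "real \<Rightarrow> real"
  assumes phi_mono: "\<And>x y. 0 < x \<Longrightarrow> x \<le> y \<Longrightarrow> phi y \<le> phi x"
    and s: "growth_sol phi x" and x0: "x 0 = exp (aT * y)"
  shows "growth_map aT phi y = ln (x 1) / aT"
  unfolding growth_map_def
proof (rule the_equality)
  show "\<exists>x'. growth_sol phi x' \<and> x' 0 = exp (aT * y) \<and> ln (x 1) / aT = ln (x' 1) / aT"
    using s x0 by blast
  fix z assume "\<exists>x'. growth_sol phi x' \<and> x' 0 = exp (aT * y) \<and> z = ln (x' 1) / aT"
  then obtain x' where x': "growth_sol phi x'" "x' 0 = exp (aT * y)" "z = ln (x' 1) / aT" by blast
  have "ln (x 1) \<le> ln (x' 1)" "ln (x' 1) \<le> ln (x 1)"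
    using sol_compare[OF phi_mono s x'(1)] sol_compare[OF phi_mono x'(1) s] x0 x'(2) by auto
  then show "z = ln (x 1) / aT" using x' by simp
qed

lemma growth_map_props:
  fixes phi :: "real \<Rightarrow> real"
  assumes aT: "aT > 0"
    and phi_cont: "continuous_on {0<..} phi"
    and phi_mono: "\<And>x y. 0 < x \<Longrightarrow> x \<le> y \<Longrightarrow> phi y \<le> phi x"
    and phi_pos: "\<And>x. x > 0 \<Longrightarrow> phi x > 0"
    and y: "y1 \<le> y2"
  shows "growth_map aT phi y1 \<le> growth_map aT phi y2 \<and>
         growth_map aT phi y2 - growth_map aT phi y1 \<le> y2 - y1"
proof -
  obtain x1 where x1: "growth_sol phi x1" "x1 0 = exp (aT * y1)"
    using exists_sol[OF phi_cont phi_mono phi_pos] by blast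
  obtain x2 where x2: "growth_sol phi x2" "x2 0 = exp (aT * y2)"
    using exists_sol[OF phi_cont phi_mono phi_pos] by blast
  have "ln (x1 0) \<le> ln (x2 0)" using x1 x2 y aT by simp
  from sol_compare[OF phi_mono x1(1) x2(1) this]
  have "ln (x1 1) \<le> ln (x2 1)" "ln (x2 1) - ln (x1 1) \<le> aT * y2 - aT * y1" using x1 x2 by auto
  moreover have "growth_map aT phi y1 = ln (x1 1) / aT" "growth_map aT phi y2 = ln (x2 1) / aT"
    using growth_map_eq[OF phi_mono x1] growth_map_eq[OF phi_mono x2] by auto
  moreover have "(ln (x2 1) - ln (x1 1)) / aT \<le> y2 - y1"
    using calculation(2) aT by (subst pos_divide_le_eq) (auto simp: algebra_simps)
  ultimately show ?thesis using aT
    by (auto simp: divide_right_mono diff_divide_distrib[symmetric])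
qed



lemma Y_local:
  assumes "\<And>k. k \<le> n \<Longrightarrow> d k = e k"
  shows "Yplus aT abT phi X0 d n = Yplus aT abT phi X0 e n"
  using assms by (induction n) auto

lemma BED_T_mono:
  assumes "abT > 0" "0 \<le> x" "x \<le> y"
  shows "BED_T abT x \<le> BED_T abT y"
proof -
  have "x * x \<le> y * y" using assms by (intro mult_mono) auto
  then have "x * x / abT \<le> y * y / abT" using assms by (intro divide_right_mono) auto
  then show ?thesis using assms by (simp add: BED_T_def algebra_simps)
qed

lemma BED_T_nonneg: "abT > 0 \<Longrightarrow> 0 \<le> x \<Longrightarrow> 0 \<le> BED_T abT x"
  by (simp add: BED_T_def)

lemma BED_O_nonneg: "g > 0 \<Longrightarrow> abO > 0 \<Longrightarrow> 0 \<le> x \<Longrightarrow> 0 \<le> BED_O g abO x"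
  by (simp add: BED_O_def)

lemma BED_O_ge: "g > 0 \<Longrightarrow> abO > 0 \<Longrightarrow> 0 \<le> x \<Longrightarrow> g * x \<le> BED_O g abO x"
  by (simp add: BED_O_def algebra_simps)

lemma swap_Y:
  assumes Fp: "\<And>y1 y2. y1 \<le> y2 \<Longrightarrow> growth_map aT phi y1 \<le> growth_map aT phi y2 \<and>
      growth_map aT phi y2 - growth_map aT phi y1 \<le> y2 - y1"
    and abT: "abT > 0"
    and jk: "j < k" and dk: "0 \<le> d k" and djk: "d k < d j" and kn: "k \<le> n"
  shows "Yplus aT abT phi X0 (d(j := d k, k := d j)) n \<le> Yplus aT abT phi X0 d n"
proof -
  define e where "e = d(j := d k, k := d j)"
  let ?Ye = "Yplus aT abT phi X0 e" and ?Yd = "Yplus aT abT phi X0 d"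
  define a where "a = BED_T abT (d j)"
  define b where "b = BED_T abT (d k)"
  have ab: "b \<le> a" unfolding a_def b_def using BED_T_mono[OF abT dk] djk by simp
  have ej: "e j = d k" and ek: "e k = d j" using jk by (auto simp: e_def)
  have eo: "e i = d i" if "i \<noteq> j" "i \<noteq> k" for i using that by (simp add: e_def)
  have C1: "j \<le> n \<longrightarrow> n < k \<longrightarrow> 0 \<le> ?Ye n - ?Yd n \<and> ?Ye n - ?Yd n \<le> a - b" for n
  proof (induction n)
    case 0
    show ?case using ej ab by (auto simp: a_def b_def)
  next
    case (Suc n)
    show ?case
    proof (cases "j = Suc n")
      case True
      have "?Ye n = ?Yd n" by (rule Y_local) (use True jk in \<open>auto intro: eo\<close>)
      then show ?thesis using True ej ab by (simp add: a_def b_def)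
    next
      case False
      show ?thesis
      proof (intro impI)
        assume h: "j \<le> Suc n" "Suc n < k"
        then have IH: "0 \<le> ?Ye n - ?Yd n \<and> ?Ye n - ?Yd n \<le> a - b" using Suc False by auto
        have "e (Suc n) = d (Suc n)" using h False by (intro eo) auto
        then show "0 \<le> ?Ye (Suc n) - ?Yd (Suc n) \<and> ?Ye (Suc n) - ?Yd (Suc n) \<le> a - b"
          using Fp[of "?Yd n" "?Ye n"] IH by simp
      qed
    qed
  qed
  have C2: "k \<le> n \<longrightarrow> ?Ye n \<le> ?Yd n" for n
  proof (induction n)
    case 0
    then show ?case using jk by simp
  next
    case (Suc n)
    show ?case
    proof (cases "k = Suc n")
      case True
      have "0 \<le> ?Ye n - ?Yd n \<and> ?Ye n - ?Yd n \<le> a - b" using C1[of n] True jk by auto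
      then show ?thesis using True ek Fp[of "?Yd n" "?Ye n"] by (simp add: a_def b_def)
    next
      case False
      show ?thesis
      proof
        assume "k \<le> Suc n"
        then have "k \<le> n" "e (Suc n) = d (Suc n)" using False jk by (auto intro: eo)
        then show "?Ye (Suc n) \<le> ?Yd (Suc n)" using Suc Fp[of "?Ye n" "?Yd n"] by simp
      qed
    qed
  qed
  show ?thesis using C2[of n] kn by (simp add: e_def)
qed

lemma sq_sum:
  fixes s :: "nat \<Rightarrow> real"
  shows "finite S \<Longrightarrow> (\<forall>i\<in>S. s i \<ge> 0) \<Longrightarrow> (\<Sum>i\<in>S. (s i)^2) \<le> (\<Sum>i\<in>S. s i)^2"
proof (induction S rule: finite_induct)
  case empty
  then show ?case by simp
next
  case (insert x F)
  have "0 \<le> s x * (\<Sum>i\<in>F. s i)" using insert.prems by (intro mult_nonneg_nonneg sum_nonneg) auto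
  then show ?case using insert by (simp add: power2_eq_square algebra_simps)
qed

lemma BED_O_alt: "BED_O g abO x = g * x + (g * x)^2 / abO"
  by (simp add: BED_O_def power2_eq_square algebra_simps)

lemma BED_T_alt: "g > 0 \<Longrightarrow> abT > 0 \<Longrightarrow> abO > 0 \<Longrightarrow>
  g * BED_T abT x = BED_O g abO x + (1 / (g * abT) - 1 / abO) * (g * x)^2"
  by (simp add: BED_O_def BED_T_def power2_eq_square field_simps)

lemma superadd:
  fixes d :: "nat \<Rightarrow> real"
  assumes abT: "abT > 0" and g: "g > 0" and abO: "abO > 0" and cond: "abO \<ge> g * abT"
    and fin: "finite S" and nn: "\<forall>i\<in>S. d i \<ge> 0" and D: "D \<ge> 0"
    and sumO: "(\<Sum>i\<in>S. BED_O g abO (d i)) \<le> BED_O g abO D"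
  shows "(\<Sum>i\<in>S. BED_T abT (d i)) \<le> BED_T abT D"
proof -
  have step1: "(\<Sum>i\<in>S. (g * d i)^2) \<le> (g * D)^2"
  proof (rule ccontr)
    assume "\<not> ?thesis"
    then have lt: "(g * D)^2 < (\<Sum>i\<in>S. (g * d i)^2)" by simp
    have "(\<Sum>i\<in>S. (g * d i)^2) \<le> (\<Sum>i\<in>S. g * d i)^2"
      by (rule sq_sum[OF fin]) (use nn g in auto)
    have "g * D < (\<Sum>i\<in>S. g * d i)"
    proof (rule ccontr)
      assume "\<not> ?thesis"
      then have "(\<Sum>i\<in>S. g * d i) \<le> g * D" by simp
      then have "(\<Sum>i\<in>S. g * d i)^2 \<le> (g * D)^2"
        by (rule power_mono) (use nn g in \<open>auto intro!: sum_nonneg\<close>)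
      then show False using lt \<open>(\<Sum>i\<in>S. (g * d i)^2) \<le> (\<Sum>i\<in>S. g * d i)^2\<close> by simp
    qed
    moreover have "(g * D)^2 / abO < (\<Sum>i\<in>S. (g * d i)^2) / abO"
      using lt abO by (simp add: divide_strict_right_mono)
    ultimately have "BED_O g abO D < (\<Sum>i\<in>S. g * d i) + (\<Sum>i\<in>S. (g * d i)^2) / abO"
      by (simp add: BED_O_alt)
    also have "\<dots> = (\<Sum>i\<in>S. BED_O g abO (d i))"
      by (simp add: BED_O_alt sum.distrib sum_divide_distrib)
    finally show False using sumO by simp
  qed
  define \<kappa> where "\<kappa> = 1 / (g * abT) - 1 / abO"
  have kappa: "\<kappa> \<ge> 0" using cond abT g abO unfolding \<kappa>_def
    by (simp add: frac_le)
  have "g * (\<Sum>i\<in>S. BED_T abT (d i)) = (\<Sum>i\<in>S. BED_O g abO (d i)) + \<kappa> * (\<Sum>i\<in>S. (g * d i)^2)"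
    by (simp add: sum_distrib_left BED_T_alt[OF g abT abO] \<kappa>_def sum.distrib)
  also have "\<dots> \<le> BED_O g abO D + \<kappa> * (g * D)^2"
    using sumO step1 kappa by (intro add_mono mult_left_mono) auto
  also have "\<dots> = g * BED_T abT D" by (simp add: BED_T_alt[OF g abT abO] \<kappa>_def)
  finally show ?thesis using g by simp
qed

lemma sum_decomp:
  fixes h :: "nat \<Rightarrow> real"
  assumes part: "Brk \<union> Fix \<union> Free = {..<N}"
    and disj: "Brk \<inter> Fix = {}" "Brk \<inter> Free = {}" "Fix \<inter> Free = {}"
  shows "(\<Sum>k<N. h k) = (\<Sum>k\<in>Brk. h k) + (\<Sum>k\<in>Fix. h k) + (\<Sum>k\<in>Free. h k)"
proof -
  have fin: "finite Brk" "finite Fix" "finite Free"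
    using part by (auto intro: finite_subset[of _ "{..<N}"])
  have "(\<Sum>k<N. h k) = (\<Sum>k\<in>Brk \<union> Fix \<union> Free. h k)" using part by simp
  also have "\<dots> = (\<Sum>k\<in>Brk \<union> Fix. h k) + (\<Sum>k\<in>Free. h k)"
    using fin disj by (intro sum.union_disjoint) auto
  also have "(\<Sum>k\<in>Brk \<union> Fix. h k) = (\<Sum>k\<in>Brk. h k) + (\<Sum>k\<in>Fix. h k)"
    using fin disj by (intro sum.union_disjoint) auto
  finally show ?thesis .
qed

lemma case1:
  assumes Fp: "\<And>y1 y2. y1 \<le> y2 \<Longrightarrow> growth_map aT phi y1 \<le> growth_map aT phi y2 \<and>
      growth_map aT phi y2 - growth_map aT phi y1 \<le> y2 - y1"
    and abT: "abT > 0" and abO: "abO > 0"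
    and g: "0 < g" and c: "c > 0"
    and part: "Brk \<union> Fix \<union> Free = {..<N}"
    and disj: "Brk \<inter> Fix = {}" "Brk \<inter> Free = {}" "Fix \<inter> Free = {}"
    and free_ne: "Free \<noteq> {}"
    and dbar_nn: "\<And>k. k \<in> Fix \<Longrightarrow> dbar k \<ge> 0"
    and fix_budget: "(\<Sum>k\<in>Fix. BED_O g abO (dbar k)) \<le> c"
    and cond: "abO \<ge> g * abT"
  shows "\<exists>d. optimal aT abT phi X0 N Brk Fix dbar g abO c d \<and>
                 (\<forall>k\<in>Free. k \<noteq> Max Free \<longrightarrow> d k = 0)"
proof -
  have finF: "finite Free" using part by (auto intro: finite_subset[of _ "{..<N}"])
  define m where "m = Max Free"
  have mF: "m \<in> Free" using finF free_ne by (simp add: m_def)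
  have m_max: "k \<le> m" if "k \<in> Free" for k using finF that by (simp add: m_def)
  have mN: "m < N" using mF part by auto
  define r where "r = c - (\<Sum>k\<in>Fix. BED_O g abO (dbar k))"
  have r: "r \<ge> 0" using fix_budget by (simp add: r_def)
  define w where "w = sqrt (1 + 4 * r / abO)"
  have w1: "w \<ge> 1" using r abO by (simp add: w_def)
  have w2: "w^2 = 1 + 4 * r / abO" using r abO by (simp add: w_def)
  define D where "D = abO * (w - 1) / (2 * g)"
  have D: "D \<ge> 0" using w1 abO g by (simp add: D_def)
  have gD: "g * D = abO * (w - 1) / 2" using g by (simp add: D_def)
  have BD: "BED_O g abO D = r"
  proof -
    have "BED_O g abO D = abO * (w - 1) / 2 + (abO * (w - 1) / 2)^2 / abO"
      by (simp add: BED_O_alt gD)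
    also have "\<dots> = abO * (w^2 - 1) / 4" using abO by (simp add: power2_eq_square field_simps)
    also have "\<dots> = r" using abO by (simp add: w2 field_simps)
    finally show ?thesis .
  qed
  define ds where "ds = (\<lambda>k. if k \<in> Fix then dbar k else if k = m then D else 0)"
  have ds_free: "ds k = (if k = m then D else 0)" if "k \<in> Free" for k
    using that disj by (auto simp: ds_def)
  have ds_brk: "ds k = 0" if "k \<in> Brk" for k
    using that disj mF by (auto simp: ds_def)
  have sumFree_ds: "(\<Sum>k\<in>Free. BED_O g abO (ds k)) = r"
  proof -
    have "(\<Sum>k\<in>Free. BED_O g abO (ds k)) = BED_O g abO (ds m) + (\<Sum>k\<in>Free - {m}. BED_O g abO (ds k))"
      using finF mF by (rule sum.remove)
    also have "(\<Sum>k\<in>Free - {m}. BED_O g abO (ds k)) = 0"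
      by (intro sum.neutral) (auto simp: ds_free BED_O_def)
    finally show ?thesis using ds_free[OF mF] BD by simp
  qed
  have feas_ds: "feasible N Brk Fix dbar g abO c ds"
    unfolding feasible_def
  proof (intro conjI)
    show "\<forall>k<N. 0 \<le> ds k" using dbar_nn D by (auto simp: ds_def)
    show "\<forall>k\<in>Brk. ds k = 0" using ds_brk by auto
    show "\<forall>k\<in>Fix. ds k = dbar k" by (auto simp: ds_def)
    show "(\<Sum>k<N. BED_O g abO (ds k)) \<le> c"
      using sum_decomp[OF part disj, of "\<lambda>k. BED_O g abO (ds k)"] sumFree_ds ds_brk
      by (simp add: r_def ds_def BED_O_def)
  qed
  have opt: "Yplus aT abT phi X0 ds (N - 1) \<le> Yplus aT abT phi X0 d' (N - 1)"
    if fd: "feasible N Brk Fix dbar g abO c d'" for d'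
  proof -
    let ?Ys = "Yplus aT abT phi X0 ds" and ?Yd = "Yplus aT abT phi X0 d'"
    define P where "P = (\<lambda>n. \<Sum>k\<in>Free \<inter> {..n}. BED_T abT (d' k))"
    have d'nn: "\<And>k. k < N \<Longrightarrow> d' k \<ge> 0" using fd by (simp add: feasible_def)
    have d'brk: "\<And>k. k \<in> Brk \<Longrightarrow> d' k = 0" using fd by (simp add: feasible_def)
    have d'fix: "\<And>k. k \<in> Fix \<Longrightarrow> d' k = dbar k" using fd by (simp add: feasible_def)
    have nonfree: "ds k = d' k" if "k < N" "k \<notin> Free" for k
    proof -
      have "k \<in> Brk \<or> k \<in> Fix" using that part by auto
      then show ?thesis using ds_brk d'brk d'fix that(2) mF by (auto simp: ds_def)
    qed
    have freeO: "(\<Sum>k\<in>Free. BED_O g abO (d' k)) \<le> r"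
    proof -
      have "(\<Sum>k\<in>Brk. BED_O g abO (d' k)) = 0" using d'brk by (simp add: BED_O_def)
      moreover have "(\<Sum>k\<in>Fix. BED_O g abO (d' k)) = (\<Sum>k\<in>Fix. BED_O g abO (dbar k))"
        using d'fix by simp
      ultimately show ?thesis
        using fd sum_decomp[OF part disj, of "\<lambda>k. BED_O g abO (d' k)"] by (simp add: feasible_def r_def)
    qed
    have P_le: "P n \<le> BED_T abT D" for n
      unfolding P_def
    proof (rule superadd[OF abT g abO cond _ _ D])
      show "finite (Free \<inter> {..n})" using finF by simp
      show "\<forall>i\<in>Free \<inter> {..n}. 0 \<le> d' i" using d'nn part by auto
      have "(\<Sum>i\<in>Free \<inter> {..n}. BED_O g abO (d' i)) \<le> (\<Sum>i\<in>Free. BED_O g abO (d' i))"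
        using finF d'nn part g abO by (intro sum_mono2) (auto intro!: BED_O_nonneg)
      then show "(\<Sum>i\<in>Free \<inter> {..n}. BED_O g abO (d' i)) \<le> BED_O g abO D" using freeO BD by simp
    qed
    have P_nn: "P n \<ge> 0" for n
      unfolding P_def using d'nn part abT by (intro sum_nonneg) (auto intro!: BED_T_nonneg)
    have P0: "P 0 = (if 0 \<in> Free then BED_T abT (d' 0) else 0)"
    proof -
      have "Free \<inter> {..0} = (if 0 \<in> Free then {0} else {})" by auto
      then show ?thesis by (simp add: P_def)
    qed
    have PS: "P (Suc n) = P n + (if Suc n \<in> Free then BED_T abT (d' (Suc n)) else 0)" for n
    proof (cases "Suc n \<in> Free")
      case True
      then have "Free \<inter> {..Suc n} = insert (Suc n) (Free \<inter> {..n})" by (auto simp: le_Suc_eq)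
      then show ?thesis using True by (simp add: P_def)
    next
      case False
      then have "Free \<inter> {..Suc n} = Free \<inter> {..n}" by (auto simp: le_Suc_eq)
      then show ?thesis using False by (simp add: P_def)
    qed
    have Fshift: "growth_map aT phi (y + p) \<le> growth_map aT phi y + p" if "p \<ge> 0" for y p
      using Fp[of y "y + p"] that by simp
    have claim: "n < N \<longrightarrow> (n < m \<longrightarrow> ?Ys n \<le> ?Yd n + P n) \<and> (m \<le> n \<longrightarrow> ?Ys n \<le> ?Yd n)" for n
    proof (induction n)
      case 0
      show ?case
      proof (intro impI conjI)
        assume "0 < N"
        show "0 < m \<Longrightarrow> ?Ys 0 \<le> ?Yd 0 + P 0"
        proof -
          assume "0 < m"
          show ?thesis
          proof (cases "0 \<in> Free")
            case True
            then show ?thesis using \<open>0 < m\<close> ds_free P0 by (simp add: BED_T_def)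
          next
            case False
            then show ?thesis using nonfree[OF \<open>0 < N\<close>] P0 by simp
          qed
        qed
        show "m \<le> 0 \<Longrightarrow> ?Ys 0 \<le> ?Yd 0"
        proof -
          assume "m \<le> 0"
          then have "m = 0" by simp
          then have "P 0 = BED_T abT (d' 0)" using P0 mF by simp
          then show ?thesis using \<open>m = 0\<close> ds_free[OF mF] P_le[of 0] by simp
        qed
      qed
    next
      case (Suc n)
      show ?case
      proof (intro impI conjI)
        assume SN: "Suc n < N"
        then have IH: "(n < m \<longrightarrow> ?Ys n \<le> ?Yd n + P n) \<and> (m \<le> n \<longrightarrow> ?Ys n \<le> ?Yd n)" using Suc by simp
        show "Suc n < m \<Longrightarrow> ?Ys (Suc n) \<le> ?Yd (Suc n) + P (Suc n)"
        proof -
          assume lt: "Suc n < m"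
          have "growth_map aT phi (?Ys n) \<le> growth_map aT phi (?Yd n + P n)"
            using IH lt Fp by auto
          also have "\<dots> \<le> growth_map aT phi (?Yd n) + P n" using Fshift P_nn by auto
          finally have A: "growth_map aT phi (?Ys n) \<le> growth_map aT phi (?Yd n) + P n" .
          show ?thesis
          proof (cases "Suc n \<in> Free")
            case True
            then show ?thesis using A lt ds_free[OF True] PS[of n] by (simp add: BED_T_def)
          next
            case False
            then show ?thesis using A nonfree[OF SN False] PS[of n] by simp
          qed
        qed
        show "m \<le> Suc n \<Longrightarrow> ?Ys (Suc n) \<le> ?Yd (Suc n)"
        proof -
          assume ge: "m \<le> Suc n"
          show ?thesis
          proof (cases "m = Suc n")
            case True
            have "growth_map aT phi (?Ys n) \<le> growth_map aT phi (?Yd n + P n)"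
              using IH True Fp by auto
            also have "\<dots> \<le> growth_map aT phi (?Yd n) + P n" using Fshift P_nn by auto
            finally have A: "growth_map aT phi (?Ys n) \<le> growth_map aT phi (?Yd n) + P n" .
            have "P (Suc n) \<le> BED_T abT D" by (rule P_le)
            then show ?thesis using A True ds_free[OF mF] PS[of n] mF by simp
          next
            case False
            then have "m \<le> n" "Suc n \<notin> Free" using ge m_max by fastforce+
            then show ?thesis using IH Fp[of "?Ys n" "?Yd n"] nonfree[OF SN] by simp
          qed
        qed
      qed
    qed
    show ?thesis using claim[of "N - 1"] mN by simp
  qed
  show ?thesis
  proof (intro exI conjI)
    show "optimal aT abT phi X0 N Brk Fix dbar g abO c ds"
      unfolding optimal_def using feas_ds opt by blast
    show "\<forall>k\<in>Free. k \<noteq> Max Free \<longrightarrow> ds k = 0" using ds_free by (simp add: m_def)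
  qed
qed



lemma Fcont:
  assumes Fp: "\<And>y1 y2. y1 \<le> y2 \<Longrightarrow> growth_map aT phi y1 \<le> growth_map aT phi y2 \<and>
      growth_map aT phi y2 - growth_map aT phi y1 \<le> y2 - y1"
  shows "continuous_on UNIV (growth_map aT phi)"
proof (rule lipschitz_on_continuous_on)
  show "1-lipschitz_on UNIV (growth_map aT phi)"
  proof (rule lipschitz_onI)
    fix x y :: real
    show "dist (growth_map aT phi x) (growth_map aT phi y) \<le> 1 * dist x y"
      using Fp[of x y] Fp[of y x] by (cases "x \<le> y") (auto simp: dist_real_def abs_if)
  qed simp
qed

lemma BED_T_cont: "abT \<noteq> 0 \<Longrightarrow> continuous_on UNIV (BED_T abT)"
  unfolding BED_T_def by (intro continuous_intros) auto

lemma Ycont: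
  assumes abT: "abT \<noteq> 0" and Fc: "continuous_on UNIV (growth_map aT phi)"
  shows "continuous_on UNIV (\<lambda>d::nat \<Rightarrow> real. Yplus aT abT phi X0 d n)"
proof (induction n)
  case 0
  have "continuous_on UNIV (\<lambda>d::nat \<Rightarrow> real. BED_T abT (d 0))"
    using continuous_on_compose2[OF BED_T_cont[OF abT] continuous_on_product_coordinates[of 0]] by simp
  then show ?case by (simp add: continuous_intros)
next
  case (Suc n)
  have "continuous_on UNIV (\<lambda>d::nat \<Rightarrow> real. BED_T abT (d (Suc n)))"
    using continuous_on_compose2[OF BED_T_cont[OF abT] continuous_on_product_coordinates[of "Suc n"]] by simp
  moreover have "continuous_on UNIV (\<lambda>d::nat \<Rightarrow> real. growth_map aT phi (Yplus aT abT phi X0 d n))"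
    using continuous_on_compose2[OF Fc Suc] by simp
  ultimately show ?case by (simp add: continuous_intros)
qed

lemma compact_box: "compact {d::nat \<Rightarrow> real. \<forall>k. 0 \<le> d k \<and> d k \<le> M}"
proof -
  have "compactin (product_topology (\<lambda>_. euclideanreal) UNIV) (PiE UNIV (\<lambda>_::nat. {0..M}))"
    by (simp add: compactin_PiE)
  moreover have "PiE UNIV (\<lambda>_::nat. {0..M}) = {d::nat \<Rightarrow> real. \<forall>k. 0 \<le> d k \<and> d k \<le> M}"
    by (auto simp: PiE_def Pi_def)
  ultimately show ?thesis by (simp add: euclidean_product_topology)
qed

lemma closed_ball_collect:
  "(\<And>k. closed {d. P k d}) \<Longrightarrow> closed {d. \<forall>k\<in>A. P k d}"
proof -
  assume "\<And>k. closed {d. P k d}"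
  moreover have "{d. \<forall>k\<in>A. P k d} = (\<Inter>k\<in>A. {d. P k d})" by auto
  ultimately show ?thesis by (simp add: closed_INT)
qed

lemma closed_feas:
  assumes "abO \<noteq> 0"
  shows "closed {d::nat \<Rightarrow> real. feasible N Brk Fix dbar g abO c d}"
proof -
  have "{d::nat \<Rightarrow> real. feasible N Brk Fix dbar g abO c d} =
     {d. \<forall>k\<in>{..<N}. 0 \<le> d k} \<inter> {d. \<forall>k\<in>Brk. d k = 0} \<inter> {d. \<forall>k\<in>Fix. d k = dbar k}
     \<inter> {d. (\<Sum>k<N. BED_O g abO (d k)) \<le> c}"
    by (auto simp: feasible_def)
  moreover have "closed {d::nat \<Rightarrow> real. (\<Sum>k<N. BED_O g abO (d k)) \<le> c}"
    unfolding BED_O_def using assms by (intro closed_Collect_le continuous_intros) auto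
  moreover have "closed {d::nat \<Rightarrow> real. \<forall>k\<in>{..<N}. 0 \<le> d k}"
    by (intro closed_ball_collect closed_Collect_le continuous_intros) auto
  moreover have "closed {d::nat \<Rightarrow> real. \<forall>k\<in>Brk. d k = 0}"
    by (intro closed_ball_collect closed_Collect_eq continuous_intros) auto
  moreover have "closed {d::nat \<Rightarrow> real. \<forall>k\<in>Fix. d k = dbar k}"
    by (intro closed_ball_collect closed_Collect_eq continuous_intros) auto
  ultimately show ?thesis by (simp add: closed_Int)
qed


lemma sum_upd2:
  fixes h :: "nat \<Rightarrow> real \<Rightarrow> real"
  assumes "finite A" "j \<in> A" "k \<in> A" "j \<noteq> k"
  shows "(\<Sum>i\<in>A. h i ((d(j := x, k := y)) i)) = (\<Sum>i\<in>A - {j, k}. h i (d i)) + h j x + h k y"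
proof -
  have A: "A = insert j (insert k (A - {j, k}))" using assms by auto
  have "(\<Sum>i\<in>A. h i ((d(j := x, k := y)) i)) = (\<Sum>i\<in>insert j (insert k (A - {j, k})). h i ((d(j := x, k := y)) i))"
    using A by simp
  also have "\<dots> = h j x + (h k y + (\<Sum>i\<in>A - {j, k}. h i ((d(j := x, k := y)) i)))"
    using assms by (simp add: sum.insert)
  also have "(\<Sum>i\<in>A - {j, k}. h i ((d(j := x, k := y)) i)) = (\<Sum>i\<in>A - {j, k}. h i (d i))"
    by (intro sum.cong) auto
  finally show ?thesis by linarith
qed

lemma case2:
  assumes Fp: "\<And>y1 y2. y1 \<le> y2 \<Longrightarrow> growth_map aT phi y1 \<le> growth_map aT phi y2 \<and>
      growth_map aT phi y2 - growth_map aT phi y1 \<le> y2 - y1"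
    and abT: "abT > 0" and abO: "abO > 0"
    and g: "0 < g" and c: "c > 0"
    and N: "N \<ge> 1"
    and part: "Brk \<union> Fix \<union> Free = {..<N}"
    and disj: "Brk \<inter> Fix = {}" "Brk \<inter> Free = {}" "Fix \<inter> Free = {}"
    and dbar_nn: "\<And>k. k \<in> Fix \<Longrightarrow> dbar k \<ge> 0"
    and fix_budget: "(\<Sum>k\<in>Fix. BED_O g abO (dbar k)) \<le> c"
  shows "\<exists>d. optimal aT abT phi X0 N Brk Fix dbar g abO c d \<and>
                 (\<forall>j\<in>Free. \<forall>k\<in>Free. j \<le> k \<longrightarrow> d j \<le> d k)"
proof -
  let ?Y = "\<lambda>d. Yplus aT abT phi X0 d (N - 1)"
  define M where "M = c / g"
  define K where "K = {d::nat \<Rightarrow> real. \<forall>k. 0 \<le> d k \<and> d k \<le> M} \<inter> {d. feasible N Brk Fix dbar g abO c d}"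
  have finFix: "finite Fix" using part by (auto intro: finite_subset[of _ "{..<N}"])
  have bound: "d k \<le> M" if "d k \<ge> 0" "(\<Sum>k\<in>A. BED_O g abO (d k)) \<le> c" "k \<in> A" "finite A"
    "\<forall>k\<in>A. d k \<ge> 0" for d :: "nat \<Rightarrow> real" and k A
  proof -
    have "g * d k \<le> BED_O g abO (d k)" using BED_O_ge g abO that by auto
    also have "\<dots> \<le> (\<Sum>k\<in>A. BED_O g abO (d k))"
      using that g abO by (intro member_le_sum) (auto intro!: BED_O_nonneg)
    finally have "g * d k \<le> c" using that by simp
    then show ?thesis using g by (simp add: M_def pos_le_divide_eq mult.commute)
  qed
  have Kcomp: "compact K" unfolding K_def
    by (intro compact_Int_closed compact_box closed_feas) (use abO in auto)
  define d0 where "d0 = (\<lambda>k. if k \<in> Fix then dbar k else 0)"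
  have "d0 \<in> K"
  proof -
    have zB: "(\<Sum>k\<in>Brk. BED_O g abO (d0 k)) = 0" using disj
      by (intro sum.neutral) (auto simp: d0_def BED_O_def)
    have zF: "(\<Sum>k\<in>Free. BED_O g abO (d0 k)) = 0" using disj
      by (intro sum.neutral) (auto simp: d0_def BED_O_def)
    have zX: "(\<Sum>k\<in>Fix. BED_O g abO (d0 k)) = (\<Sum>k\<in>Fix. BED_O g abO (dbar k))"
      by (simp add: d0_def)
    have "(\<Sum>k<N. BED_O g abO (d0 k)) = (\<Sum>k\<in>Fix. BED_O g abO (dbar k))"
      using sum_decomp[OF part disj, of "\<lambda>k. BED_O g abO (d0 k)"] zB zF zX by simp
    then have f: "feasible N Brk Fix dbar g abO c d0"
      using fix_budget disj dbar_nn by (auto simp: feasible_def d0_def)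
    have "d0 k \<le> M" for k
    proof (cases "k \<in> Fix")
      case True
      then show ?thesis using bound[of dbar k Fix] dbar_nn fix_budget finFix by (simp add: d0_def)
    next
      case False
      then show ?thesis using c g by (simp add: d0_def M_def)
    qed
    then show ?thesis using f dbar_nn by (auto simp: K_def d0_def)
  qed
  then have Kne: "K \<noteq> {}" by auto
  have Yc: "continuous_on K ?Y"
    using Ycont[OF _ Fcont[OF Fp], of abT X0 "N - 1"] abT by (auto intro: continuous_on_subset)
  obtain dmin where dmin: "dmin \<in> K" "\<And>d. d \<in> K \<Longrightarrow> ?Y dmin \<le> ?Y d"
    using continuous_attains_inf[OF Kcomp Kne Yc] by blast
  define Opt where "Opt = K \<inter> {d. ?Y d \<le> ?Y dmin}"
  have Ocomp: "compact Opt" unfolding Opt_def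
    by (intro compact_Int_closed Kcomp closed_Collect_le Ycont[OF _ Fcont[OF Fp]] continuous_intros)
       (use abT in auto)
  have One: "Opt \<noteq> {}" using dmin by (auto simp: Opt_def)
  define \<Phi> where "\<Phi> = (\<lambda>d::nat \<Rightarrow> real. \<Sum>k<N. real k * d k)"
  have Phic: "continuous_on Opt \<Phi>" unfolding \<Phi>_def by (intro continuous_intros continuous_on_subset[OF continuous_on_product_coordinates]) auto
  obtain d1 where d1: "d1 \<in> Opt" "\<And>d. d \<in> Opt \<Longrightarrow> \<Phi> d \<le> \<Phi> d1"
    using continuous_attains_sup[OF Ocomp One Phic] by blast
  have d1K: "d1 \<in> K" and d1Y: "?Y d1 \<le> ?Y dmin" using d1 by (auto simp: Opt_def)
  have feas1: "feasible N Brk Fix dbar g abO c d1" using d1K by (simp add: K_def)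
  have opt1: "?Y d1 \<le> ?Y d'" if fd: "feasible N Brk Fix dbar g abO c d'" for d'
  proof -
    define d'' where "d'' = (\<lambda>k. if k < N then d' k else 0)"
    have nn: "\<forall>k<N. 0 \<le> d' k" using fd by (simp add: feasible_def)
    have s: "(\<Sum>k<N. BED_O g abO (d' k)) \<le> c" using fd by (simp add: feasible_def)
    have "d'' k \<le> M" for k
    proof (cases "k < N")
      case True
      then show ?thesis using bound[of d' k "{..<N}"] nn s by (simp add: d''_def)
    next
      case False
      then show ?thesis using c g by (simp add: d''_def M_def)
    qed
    moreover have "feasible N Brk Fix dbar g abO c d''"
      using fd part unfolding feasible_def d''_def by auto
    ultimately have "d'' \<in> K" using nn by (auto simp: K_def d''_def)
    then have "?Y dmin \<le> ?Y d''" by (rule dmin(2))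
    also have "?Y d'' = ?Y d'" by (rule Y_local) (use N in \<open>auto simp: d''_def\<close>)
    finally show ?thesis using d1Y by simp
  qed
  have mono1: "d1 j \<le> d1 k" if jk: "j \<in> Free" "k \<in> Free" "j \<le> k" for j k
  proof (rule ccontr)
    assume "\<not> d1 j \<le> d1 k"
    then have lt: "d1 k < d1 j" by simp
    then have jlk: "j < k" using jk by (cases "j = k") auto
    have jN: "j < N" and kN: "k < N" using jk part by auto
    have jnot: "j \<notin> Brk" "j \<notin> Fix" "k \<notin> Brk" "k \<notin> Fix" using jk disj by auto
    define e where "e = d1(j := d1 k, k := d1 j)"
    have d1nn: "\<forall>i<N. 0 \<le> d1 i" using feas1 by (simp add: feasible_def)
    have sumeq: "(\<Sum>i<N. BED_O g abO (e i)) = (\<Sum>i<N. BED_O g abO (d1 i))"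
    proof -
      have "(\<Sum>i<N. BED_O g abO (e i)) = (\<Sum>i\<in>{..<N} - {j, k}. BED_O g abO (d1 i)) + BED_O g abO (d1 k) + BED_O g abO (d1 j)"
        unfolding e_def using sum_upd2[of "{..<N}" j k "\<lambda>i x. BED_O g abO x" d1 "d1 k" "d1 j"] jN kN jlk by simp
      moreover have "(\<Sum>i<N. BED_O g abO (d1 i)) = (\<Sum>i\<in>{..<N} - {j, k}. BED_O g abO (d1 i)) + BED_O g abO (d1 j) + BED_O g abO (d1 k)"
        using sum_upd2[of "{..<N}" j k "\<lambda>i x. BED_O g abO x" d1 "d1 j" "d1 k"] jN kN jlk by simp
      ultimately show ?thesis by simp
    qed
    have "feasible N Brk Fix dbar g abO c e"
      using feas1 sumeq jnot jN kN unfolding feasible_def by (auto simp: e_def)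
    moreover have "\<forall>i. 0 \<le> e i \<and> e i \<le> M" using d1K by (auto simp: K_def e_def)
    ultimately have eK: "e \<in> K" by (simp add: K_def)
    have "?Y e \<le> ?Y d1"
      unfolding e_def by (rule swap_Y[OF Fp abT jlk _ lt]) (use d1nn kN in auto)
    then have "e \<in> Opt" using eK d1Y by (auto simp: Opt_def)
    then have "\<Phi> e \<le> \<Phi> d1" by (rule d1(2))
    moreover have "\<Phi> e - \<Phi> d1 = (real k - real j) * (d1 j - d1 k)"
    proof -
      have "\<Phi> e = (\<Sum>i\<in>{..<N} - {j, k}. real i * d1 i) + real j * d1 k + real k * d1 j"
        unfolding e_def \<Phi>_def using sum_upd2[of "{..<N}" j k "\<lambda>i x. real i * x" d1 "d1 k" "d1 j"] jN kN jlk by simp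
      moreover have "\<Phi> d1 = (\<Sum>i\<in>{..<N} - {j, k}. real i * d1 i) + real j * d1 j + real k * d1 k"
        unfolding \<Phi>_def using sum_upd2[of "{..<N}" j k "\<lambda>i x. real i * x" d1 "d1 j" "d1 k"] jN kN jlk by simp
      ultimately show ?thesis by (simp add: algebra_simps)
    qed
    moreover have "(real k - real j) * (d1 j - d1 k) > 0" using jlk lt by simp
    ultimately show False by simp
  qed
  show ?thesis
    using feas1 opt1 mono1 unfolding optimal_def by blast
qed


theorem corollary1:
  fixes aT bT abO g c X0 :: real
    and phi :: "real \<Rightarrow> real"
    and N :: nat
    and Brk Fix Free :: "nat set"
    and dbar :: "nat \<Rightarrow> real"
  assumes aT: "aT > 0" and bT: "bT > 0" and abO: "abO > 0"
    and g: "0 < g" "g < 1" and c: "c > 0" and X0: "X0 > 0"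
    and phi_cont: "continuous_on {0<..} phi"
    and phi_mono: "\<And>x y. 0 < x \<Longrightarrow> x \<le> y \<Longrightarrow> phi y \<le> phi x"
    and phi_pos: "\<And>x. x > 0 \<Longrightarrow> phi x > 0"
    and N: "N \<ge> 1"
    and part: "Brk \<union> Fix \<union> Free = {..<N}"
    and disj: "Brk \<inter> Fix = {}" "Brk \<inter> Free = {}" "Fix \<inter> Free = {}"
    and free_ne: "Free \<noteq> {}"
    and dbar_nn: "\<And>k. k \<in> Fix \<Longrightarrow> dbar k \<ge> 0"
    and fix_budget: "(\<Sum>k\<in>Fix. BED_O g abO (dbar k)) \<le> c"
  shows "(abO \<ge> g * (aT / bT) \<longrightarrow>
            (\<exists>d. optimal aT (aT / bT) phi X0 N Brk Fix dbar g abO c d \<and>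
                 (\<forall>k\<in>Free. k \<noteq> Max Free \<longrightarrow> d k = 0)))
       \<and> (abO < g * (aT / bT) \<longrightarrow>
            (\<exists>d. optimal aT (aT / bT) phi X0 N Brk Fix dbar g abO c d \<and>
                 (\<forall>j\<in>Free. \<forall>k\<in>Free. j \<le> k \<longrightarrow> d j \<le> d k)))"
proof -
  have abT: "aT / bT > 0" using aT bT by simp
  have Fp: "\<And>y1 y2. y1 \<le> y2 \<Longrightarrow> growth_map aT phi y1 \<le> growth_map aT phi y2 \<and>
      growth_map aT phi y2 - growth_map aT phi y1 \<le> y2 - y1"
    using growth_map_props[OF aT phi_cont phi_mono phi_pos] by blast
  show ?thesis
  proof (intro conjI impI)
    assume "abO \<ge> g * (aT / bT)"
    then show "\<exists>d. optimal aT (aT / bT) phi X0 N Brk Fix dbar g abO c d \<and>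
                 (\<forall>k\<in>Free. k \<noteq> Max Free \<longrightarrow> d k = 0)"
      using case1[OF Fp abT abO g(1) c part disj free_ne dbar_nn fix_budget] by blast
  next
    show "\<exists>d. optimal aT (aT / bT) phi X0 N Brk Fix dbar g abO c d \<and>
                 (\<forall>j\<in>Free. \<forall>k\<in>Free. j \<le> k \<longrightarrow> d j \<le> d k)"
      using case2[OF Fp abT abO g(1) c N part disj dbar_nn fix_budget] by blast
  qed
qed

end
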